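(* Let $\mathcal{A}$ be a C*-algebra, let $E$ be a Hilbert $\mathcal{A}$-module satisfying property $[\mathbb{H}]$ and let $C\in\mathcal{K}(E)$. Then for every nonzero $\lambda\in\mathbb{C}$ the range $\mathrm{Ran}(\lambda I-C)$ is closed and is an orthogonal summand of $E$. In particular, $E=\mathrm{Ker}(I-C^* )\oplus \mathrm{Ran}(I-C)$.
   Context: A (right) Hilbert $\mathcal{A}$-module $E$ is a right $\mathcal{A}$-module with an $\mathcal{A}$-valued inner product $\langle\cdot,\cdot\rangle$ (linear in the second variable, $\langle x,ya\rangle=\langle x,y\rangle a$, $\langle y,x\rangle=\langle x,y\rangle^*$, $\langle x,x\rangle\ge 0$ with equality iff $x=0$), complete in the norm $\|x\|=\|\langle x,x\rangle\|^{1/2}$. $\mathcal{L}(E)$ denotes the C*-algebra of adjointable operators on $E$; for $x,y\in E$, $\theta_{x,y}(z)=x\langle y,z\rangle$; $\mathcal{K}(E)$ (the compact operators) is the norm closure in $\mathcal{L}(E)$ of the linear span of $\{\theta_{x,y}:x,y\in E\}$. $E$ satisfies property $[\mathbb{H}]$ if for every bounded sequence $(\zeta_n)$ in $E$ there exist a subsequence $(\zeta_{n_k})$ and $\zeta\in E$ such that $\langle v,\zeta_{n_k}\rangle\to\langle v,\zeta\rangle$ for every $v\in E$. A closed submodule $F$ is an orthogonal summand if $E=F\oplus F^\perp$, where $F^\perp=\{y\in E:\langle x,y\rangle=0\ \forall x\in F\}$. *)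

theory Defs
  imports "HOL-Analysis.Analysis"
begin

text \<open>C*-algebra: a real Banach algebra 'a (the additive/norm/multiplicative structure
  comes from the type class) equipped with a complex scalar multiplication sc
  (extending the real one) and an involution st satisfying the C*-identity.\<close>

definition cstar_algebra ::
  "(complex \<Rightarrow> 'a::{real_normed_algebra,banach} \<Rightarrow> 'a) \<Rightarrow> ('a \<Rightarrow> 'a) \<Rightarrow> bool" where
  "cstar_algebra sc st \<longleftrightarrow>
     (\<forall>c d x. sc (c + d) x = sc c x + sc d x) \<and>
     (\<forall>c x y. sc c (x + y) = sc c x + sc c y) \<and>
     (\<forall>c d x. sc (c * d) x = sc c (sc d x)) \<and>
     (\<forall>r x. sc (complex_of_real r) x = scaleR r x) \<and>
     (\<forall>c x. norm (sc c x) = cmod c * norm x) \<and>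
     (\<forall>c x y. sc c (x * y) = sc c x * y \<and> sc c (x * y) = x * sc c y) \<and>
     (\<forall>x y. st (x + y) = st x + st y) \<and>
     (\<forall>c x. st (sc c x) = sc (cnj c) (st x)) \<and>
     (\<forall>x y. st (x * y) = st y * st x) \<and>
     (\<forall>x. st (st x) = x) \<and>
     (\<forall>x. norm (st x * x) = (norm x)\<^sup>2)"

definition cstar_positive :: "('a::{real_normed_algebra,banach} \<Rightarrow> 'a) \<Rightarrow> 'a \<Rightarrow> bool" where
  "cstar_positive st a \<longleftrightarrow> (\<exists>b. a = st b * b)"

text \<open>Right Hilbert module over the C*-algebra (sc, st): carrier type 'e, complex
  scalar multiplication scE, right action act, A-valued inner product ip; the type's
  norm is the inner-product norm and the type is complete.\<close>

definition hilbert_module ::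
  "(complex \<Rightarrow> 'a::{real_normed_algebra,banach} \<Rightarrow> 'a) \<Rightarrow> ('a \<Rightarrow> 'a) \<Rightarrow>
   (complex \<Rightarrow> 'e::banach \<Rightarrow> 'e) \<Rightarrow> ('e \<Rightarrow> 'a \<Rightarrow> 'e) \<Rightarrow> ('e \<Rightarrow> 'e \<Rightarrow> 'a) \<Rightarrow> bool" where
  "hilbert_module sc st scE act ip \<longleftrightarrow>
     (\<forall>c d x. scE (c + d) x = scE c x + scE d x) \<and>
     (\<forall>c x y. scE c (x + y) = scE c x + scE c y) \<and>
     (\<forall>c d x. scE (c * d) x = scE c (scE d x)) \<and>
     (\<forall>r x. scE (complex_of_real r) x = scaleR r x) \<and>
     (\<forall>x y a. act (x + y) a = act x a + act y a) \<and>
     (\<forall>x a b. act x (a + b) = act x a + act x b) \<and>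
     (\<forall>x a b. act x (a * b) = act (act x a) b) \<and>
     (\<forall>c x a. scE c (act x a) = act (scE c x) a \<and> scE c (act x a) = act x (sc c a)) \<and>
     (\<forall>x y z. ip x (y + z) = ip x y + ip x z) \<and>
     (\<forall>c x y. ip x (scE c y) = sc c (ip x y)) \<and>
     (\<forall>x y a. ip x (act y a) = ip x y * a) \<and>
     (\<forall>x y. ip y x = st (ip x y)) \<and>
     (\<forall>x. cstar_positive st (ip x x)) \<and>
     (\<forall>x. ip x x = 0 \<longleftrightarrow> x = 0) \<and>
     (\<forall>x. norm x = sqrt (norm (ip x x)))"

definition property_H :: "('e::banach \<Rightarrow> 'e \<Rightarrow> 'a::{real_normed_algebra,banach}) \<Rightarrow> bool" where
  "property_H ip \<longleftrightarrow>
     (\<forall>\<zeta>::nat \<Rightarrow> 'e. (\<exists>B. \<forall>n. norm (\<zeta> n) \<le> B) \<longrightarrow>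
        (\<exists>r \<zeta>0. strict_mono r \<and> (\<forall>v. (\<lambda>k. ip v (\<zeta> (r k))) \<longlonglongrightarrow> ip v \<zeta>0)))"

definition adjointable :: "('e \<Rightarrow> 'e \<Rightarrow> 'a) \<Rightarrow> ('e \<Rightarrow> 'e) \<Rightarrow> bool" where
  "adjointable ip T \<longleftrightarrow> (\<exists>S. \<forall>x y. ip (T x) y = ip x (S y))"

definition adjoint :: "('e \<Rightarrow> 'e \<Rightarrow> 'a) \<Rightarrow> ('e \<Rightarrow> 'e) \<Rightarrow> ('e \<Rightarrow> 'e)" where
  "adjoint ip T = (SOME S. \<forall>x y. ip (T x) y = ip x (S y))"

definition theta :: "('e \<Rightarrow> 'a \<Rightarrow> 'e) \<Rightarrow> ('e \<Rightarrow> 'e \<Rightarrow> 'a) \<Rightarrow> 'e \<Rightarrow> 'e \<Rightarrow> 'e \<Rightarrow> 'e" where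
  "theta act ip x y = (\<lambda>z. act x (ip y z))"

definition finite_rank_op ::
  "(complex \<Rightarrow> 'e::banach \<Rightarrow> 'e) \<Rightarrow> ('e \<Rightarrow> 'a \<Rightarrow> 'e) \<Rightarrow> ('e \<Rightarrow> 'e \<Rightarrow> 'a) \<Rightarrow> ('e \<Rightarrow> 'e) \<Rightarrow> bool" where
  "finite_rank_op scE act ip F \<longleftrightarrow>
     (\<exists>n::nat. \<exists>cs xs ys. F = (\<lambda>z. \<Sum>i<n. scE (cs i) (theta act ip (xs i) (ys i) z)))"

text \<open>Compact operators K(E): norm closure (in L(E), operator norm) of that span.\<close>
definition compact_op ::
  "(complex \<Rightarrow> 'e::banach \<Rightarrow> 'e) \<Rightarrow> ('e \<Rightarrow> 'a \<Rightarrow> 'e) \<Rightarrow> ('e \<Rightarrow> 'e \<Rightarrow> 'a) \<Rightarrow> ('e \<Rightarrow> 'e) \<Rightarrow> bool" where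
  "compact_op scE act ip T \<longleftrightarrow> adjointable ip T \<and>
     (\<forall>\<epsilon>>0. \<exists>F. finite_rank_op scE act ip F \<and> (\<forall>z. norm (T z - F z) \<le> \<epsilon> * norm z))"

definition orth :: "('e::banach \<Rightarrow> 'e \<Rightarrow> 'a::{real_normed_algebra,banach}) \<Rightarrow> 'e set \<Rightarrow> 'e set" where
  "orth ip F = {y. \<forall>x\<in>F. ip x y = 0}"

definition direct_sum :: "'e::banach set \<Rightarrow> 'e set \<Rightarrow> bool" where
  "direct_sum F G \<longleftrightarrow> (\<forall>x. \<exists>y\<in>F. \<exists>z\<in>G. x = y + z) \<and> F \<inter> G = {0}"

definition orth_summand :: "('e::banach \<Rightarrow> 'e \<Rightarrow> 'a::{real_normed_algebra,banach}) \<Rightarrow> 'e set \<Rightarrow> bool" where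
  "orth_summand ip F \<longleftrightarrow> direct_sum F (orth ip F)"

end

theory Submission
  imports Defs
begin


definition CPc :: "('e::real_normed_vector \<Rightarrow> 'e) \<Rightarrow> bool" where
  "CPc K \<longleftrightarrow> (\<forall>\<zeta>::nat \<Rightarrow> 'e. (\<exists>B. \<forall>n. norm (\<zeta> n) \<le> B) \<longrightarrow>
      (\<exists>r. strict_mono r \<and> convergent (\<lambda>k. K (\<zeta> (r k)))))"

lemma CPcD:
  fixes \<zeta> :: "nat \<Rightarrow> 'a::real_normed_vector"
  assumes "CPc K" "\<And>n. norm (\<zeta> n) \<le> B"
  obtains r L where "strict_mono r" "(\<lambda>k. K (\<zeta> (r k))) \<longlonglongrightarrow> L"
proof -
  have "\<exists>B. \<forall>n. norm (\<zeta> n) \<le> B" using assms(2) by blast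
  with spec[OF assms(1)[unfolded CPc_def], of \<zeta>]
  obtain r where r: "strict_mono r" "convergent (\<lambda>k. K (\<zeta> (r k)))"
    by blast
  from r(2) obtain L where "(\<lambda>k. K (\<zeta> (r k))) \<longlonglongrightarrow> L"
    unfolding convergent_def by blast
  then show ?thesis using that r(1) by blast
qed

lemma CPc_add:
  assumes A: "CPc A" and B: "CPc B"
  shows "CPc (\<lambda>z. A z + B z)"
  unfolding CPc_def
proof (intro allI impI)
  fix \<zeta> :: "nat \<Rightarrow> 'a" assume "\<exists>Bd. \<forall>n. norm (\<zeta> n) \<le> Bd"
  then obtain Bd where Bd: "\<And>n. norm (\<zeta> n) \<le> Bd" by blast
  obtain r1 L1 where r1: "strict_mono r1" and L1: "(\<lambda>k. A (\<zeta> (r1 k))) \<longlonglongrightarrow> L1"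
    by (rule CPcD[OF A Bd])
  have Bd': "\<And>n. norm (\<zeta> (r1 n)) \<le> Bd" using Bd by blast
  obtain r2 L2 where r2: "strict_mono r2" and L2: "(\<lambda>k. B (\<zeta> (r1 (r2 k)))) \<longlonglongrightarrow> L2"
    by (rule CPcD[OF B Bd'])
  have "(\<lambda>k. A (\<zeta> (r1 (r2 k)))) \<longlonglongrightarrow> L1"
    using LIMSEQ_subseq_LIMSEQ[OF L1 r2] by (simp add: o_def)
  then have "(\<lambda>k. A (\<zeta> (r1 (r2 k))) + B (\<zeta> (r1 (r2 k)))) \<longlonglongrightarrow> L1 + L2"
    using L2 by (intro tendsto_add)
  then show "\<exists>r. strict_mono r \<and> convergent (\<lambda>k. A (\<zeta> (r k)) + B (\<zeta> (r k)))"
    using strict_mono_o[OF r1 r2] unfolding convergent_def by (auto simp: o_def)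
qed

lemma CPc_left:
  assumes A: "CPc A" and L: "bounded_linear L"
  shows "CPc (\<lambda>z. L (A z))"
  unfolding CPc_def
proof (intro allI impI)
  fix \<zeta> :: "nat \<Rightarrow> 'a" assume "\<exists>Bd. \<forall>n. norm (\<zeta> n) \<le> Bd"
  then obtain Bd where Bd: "\<And>n. norm (\<zeta> n) \<le> Bd" by blast
  obtain r1 L1 where r1: "strict_mono r1" and L1: "(\<lambda>k. A (\<zeta> (r1 k))) \<longlonglongrightarrow> L1"
    by (rule CPcD[OF A Bd])
  have "(\<lambda>k. L (A (\<zeta> (r1 k)))) \<longlonglongrightarrow> L L1"
    using bounded_linear.tendsto[OF L L1] .
  then show "\<exists>r. strict_mono r \<and> convergent (\<lambda>k. L (A (\<zeta> (r k))))"
    using r1 unfolding convergent_def by blast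
qed

lemma CPc_right:
  assumes A: "CPc A" and L: "bounded_linear L"
  shows "CPc (\<lambda>z. A (L z))"
  unfolding CPc_def
proof (intro allI impI)
  fix \<zeta> :: "nat \<Rightarrow> 'a" assume "\<exists>Bd. \<forall>n. norm (\<zeta> n) \<le> Bd"
  then obtain Bd where Bd: "\<And>n. norm (\<zeta> n) \<le> Bd" by blast
  obtain K where K: "\<And>x. norm (L x) \<le> norm x * K" "K > 0"
    using bounded_linear.pos_bounded[OF L] by blast
  have "norm (L (\<zeta> n)) \<le> Bd * K" for n
    using K(1)[of "\<zeta> n"] Bd[of n] K(2) by (meson mult_right_mono less_imp_le order_trans)
  then obtain r1 L1 where r1: "strict_mono r1" and L1: "(\<lambda>k. A (L (\<zeta> (r1 k)))) \<longlonglongrightarrow> L1"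
    by (rule CPcD[OF A, of "\<lambda>n. L (\<zeta> n)" "Bd * K"])
  then show "\<exists>r. strict_mono r \<and> convergent (\<lambda>k. A (L (\<zeta> (r k))))"
    unfolding convergent_def by blast
qed

locale hmod =
  fixes sc :: "complex \<Rightarrow> 'a::{real_normed_algebra,banach} \<Rightarrow> 'a"
    and st :: "'a \<Rightarrow> 'a"
    and scE :: "complex \<Rightarrow> 'e::banach \<Rightarrow> 'e"
    and act :: "'e \<Rightarrow> 'a \<Rightarrow> 'e"
    and ip :: "'e \<Rightarrow> 'e \<Rightarrow> 'a"
  assumes CA: "cstar_algebra sc st"
    and HM: "hilbert_module sc st scE act ip"
    and PH: "property_H ip"
begin

lemma sc_add: "sc c (x + y) = sc c x + sc c y"
  and sc_mult: "sc (c * d) x = sc c (sc d x)"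
  and sc_real: "sc (complex_of_real r) x = scaleR r x"
  and sc_norm: "norm (sc c x) = cmod c * norm x"
  and st_add: "st (x + y) = st x + st y"
  and st_sc: "st (sc c x) = sc (cnj c) (st x)"
  and st_mult: "st (x * y) = st y * st x"
  and st_st: "st (st x) = x"
  and cstar: "norm (st x * x) = (norm x)\<^sup>2"
  using CA unfolding cstar_algebra_def by metis+

lemma scE_add: "scE c (x + y) = scE c x + scE c y"
  and scE_addl: "scE (c + d) x = scE c x + scE d x"
  and scE_mult: "scE (c * d) x = scE c (scE d x)"
  and scE_real: "scE (complex_of_real r) x = scaleR r x"
  and act_addl: "act (x + y) a = act x a + act y a"
  and act_add: "act x (a + b) = act x a + act x b"
  and act_mult: "act x (a * b) = act (act x a) b"
  and scE_act1: "scE c (act x a) = act (scE c x) a"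
  and scE_act2: "scE c (act x a) = act x (sc c a)"
  and ip_add: "ip x (y + z) = ip x y + ip x z"
  and ip_scE: "ip x (scE c y) = sc c (ip x y)"
  and ip_act: "ip x (act y a) = ip x y * a"
  and ip_sym: "ip y x = st (ip x y)"
  and ip_zero_iff: "ip x x = 0 \<longleftrightarrow> x = 0"
  and normE: "norm x = sqrt (norm (ip x x))"
  using HM unfolding hilbert_module_def by metis+

lemma scE_one[simp]: "scE 1 x = x"
  using scE_real[of 1 x] by simp

lemma st_bl: "norm (st x) = norm x"
proof -
  have le: "norm y \<le> norm (st y)" for y
  proof (cases "y = 0")
    case True then show ?thesis by simp
  next
    case False
    have "(norm y)\<^sup>2 \<le> norm (st y) * norm y"
      using cstar[of y] norm_mult_ineq[of "st y" y] by simp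
    then show ?thesis using False by (simp add: power2_eq_square)
  qed
  show ?thesis using le[of x] le[of "st x"] st_st[of x] by simp
qed

lemma st_scaleR: "st (scaleR r x) = scaleR r (st x)"
  using st_sc[of "complex_of_real r" x] by (simp add: sc_real[symmetric])

lemma st_blin: "bounded_linear st"
  by (rule bounded_linear_intro[where K=1]) (auto simp: st_add st_scaleR st_bl)

lemma scE_scaleR: "scE c (scaleR r x) = scaleR r (scE c x)"
  by (metis scE_real scE_mult mult.commute)

lemma scE_norm: "norm (scE c x) = cmod c * norm x"
proof -
  have "ip (scE c x) y = sc (cnj c) (ip x y)" for y
    by (metis ip_sym ip_scE st_sc st_st)
  then have "ip (scE c x) (scE c x) = sc (c * cnj c) (ip x x)"
    by (simp add: ip_scE sc_mult)
  then have "norm (ip (scE c x) (scE c x)) = (cmod c)\<^sup>2 * norm (ip x x)"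
    by (simp add: sc_norm norm_mult power2_eq_square)
  then show ?thesis
    by (simp add: normE real_sqrt_mult)
qed

lemma scE_blin: "bounded_linear (scE c)"
  by (rule bounded_linear_intro[where K="cmod c"]) (auto simp: scE_add scE_scaleR scE_norm)

lemma norm_sq: "(norm x)\<^sup>2 = norm (ip x x)"
  by (simp add: normE)

lemma act_scaleR: "act x (scaleR r a) = scaleR r (act x a)"
  by (metis scE_act2 sc_real scE_real)

lemma act_norm: "norm (act x a) \<le> norm x * norm a"
proof -
  have "ip (act x a) y = st a * ip x y" for y
    by (metis ip_sym ip_act st_mult st_st)
  then have "ip (act x a) (act x a) = st a * (ip x x * a)"
    by (simp add: ip_act mult.assoc)
  then have "norm (ip (act x a) (act x a)) \<le> norm a * (norm (ip x x) * norm a)"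
    by (metis mult_left_mono mult_mono' norm_ge_zero norm_mult_ineq order_trans st_bl)
  then have "(norm (act x a))\<^sup>2 \<le> (norm x * norm a)\<^sup>2"
    by (simp add: norm_sq[symmetric] power2_eq_square mult_ac)
  then show ?thesis
    by (meson mult_nonneg_nonneg norm_ge_zero power2_le_imp_le)
qed

lemma act_blin: "bounded_linear (act x)"
  by (rule bounded_linear_intro[where K="norm x"]) (simp_all add: act_add act_scaleR act_norm[of x, unfolded mult.commute[of "norm x"]])

lemma ip_scaleR: "ip x (scaleR r y) = scaleR r (ip x y)"
  by (metis ip_scE sc_real scE_real)

lemma ip_addl: "ip (x + y) z = ip x z + ip y z"
  by (metis ip_sym ip_add st_add)

lemma ip_scaleRl: "ip (scaleR r x) z = scaleR r (ip x z)"
  by (metis ip_sym ip_scaleR st_scaleR)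

lemma ip_scEl: "ip (scE c x) y = sc (cnj c) (ip x y)"
  by (metis ip_sym ip_scE st_sc st_st)

lemma ip_lin2: "linear (ip x)"
  by (rule linearI) (auto simp: ip_add ip_scaleR)

lemma ip_lin1: "linear (\<lambda>x. ip x y)"
  by (rule linearI) (auto simp: ip_addl ip_scaleRl)

lemma ip_0[simp]: "ip x 0 = 0" "ip 0 x = 0"
  using linear_0[OF ip_lin2] linear_0[OF ip_lin1] by auto

lemma ip_diff: "ip x (y - z) = ip x y - ip x z"
  using linear_diff[OF ip_lin2] by blast

lemma ip_diffl: "ip (y - z) x = ip y x - ip z x"
  using linear_diff[OF ip_lin1] by blast

lemma ip_eqI: assumes "\<And>z. ip a z = ip b z" shows "a = b"
proof -
  have "ip (a - b) (a - b) = 0" using assms by (simp add: ip_diffl)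
  then show ?thesis using ip_zero_iff by simp
qed

lemma scE_lin: "linear (scE c)" using scE_blin bounded_linear.linear by blast

lemma scE_0[simp]: "scE c 0 = 0" using linear_0[OF scE_lin] .
lemma scE_diff: "scE c (x - y) = scE c x - scE c y" using linear_diff[OF scE_lin] .
lemma scE_minus: "scE c (- y) = - scE c y" using linear_neg[OF scE_lin] .


lemma ip_bound1: "\<exists>K. \<forall>y. norm (ip x y) \<le> K * norm y"
proof (rule ccontr)
  assume "\<not> ?thesis"
  then have "\<forall>n::nat. \<exists>y. norm (ip x y) > real n * norm y"
    by (meson not_le)
  then obtain y where y: "\<And>n. norm (ip x (y n)) > real n * norm (y n)"
    by metis
  have ny: "y n \<noteq> 0" for n
    using y[of n] by auto
  define w where "w n = scaleR (1 / norm (y n)) (y n)" for n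
  have nw: "norm (w n) = 1" for n
    using ny by (simp add: w_def)
  have gw: "norm (ip x (w n)) > real n" for n
  proof -
    have "ip x (w n) = scaleR (1/norm (y n)) (ip x (y n))"
      by (simp add: w_def ip_scaleR)
    then have eq: "norm (ip x (w n)) = norm (ip x (y n)) / norm (y n)"
      by simp
    have p: "0 < norm (y n)" using ny by simp
    have "norm (ip x (y n)) = norm (y n) * norm (ip x (w n))"
      using eq p by simp
    then have "norm (y n) * real n < norm (y n) * norm (ip x (w n))"
      using y[of n] by (simp add: mult.commute)
    then show ?thesis using p by (simp only: mult_less_cancel_left_pos)
  qed
  obtain r z0 where sm: "strict_mono r" and lim: "\<And>v. (\<lambda>k. ip v (w (r k))) \<longlonglongrightarrow> ip v z0"
    using PH nw unfolding property_H_def by (metis order_refl)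
  have "Bseq (\<lambda>k. ip x (w (r k)))"
    using lim[of x] convergent_imp_Bseq convergentI by blast
  then obtain B where B: "\<And>k. norm (ip x (w (r k))) \<le> B"
    by (meson BseqE)
  define k where "k = nat \<lceil>B\<rceil>"
  have "real k \<le> real (r k)"
    using seq_suble[OF sm, of k] by simp
  moreover have "B \<le> real k"
    unfolding k_def by linarith
  ultimately show False
    using gw[of "r k"] B[of k] by linarith
qed

lemma ip_blin2: "bounded_linear (ip x)"
proof -
  obtain K where K: "\<And>y. norm (ip x y) \<le> K * norm y"
    using ip_bound1 by blast
  show ?thesis
    by (rule bounded_linear_intro[where K=K]) (auto simp: ip_add ip_scaleR K mult.commute)
qed

lemma ip_blin1: "bounded_linear (\<lambda>x. ip x y)"
proof -
  have "bounded_linear (\<lambda>x. st (ip y x))"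
    using bounded_linear_compose[OF st_blin ip_blin2] by simp
  moreover have "(\<lambda>x. st (ip y x)) = (\<lambda>x. ip x y)"
    by (metis ip_sym)
  ultimately show ?thesis by simp
qed

lemma ip_bbl: "bounded_bilinear ip"
proof -
  define F where "F k = {x. \<forall>y. norm y \<le> 1 \<longrightarrow> norm (ip x y) \<le> real k}" for k::nat
  have clF: "closed (F k)" for k
    unfolding F_def
  proof (rule closed_Collect_all)
    fix y
    show "closed {x. norm y \<le> 1 \<longrightarrow> norm (ip x y) \<le> real k}"
    proof (cases "norm y \<le> 1")
      case True
      have "continuous_on UNIV (\<lambda>x. norm (ip x y))"
        by (intro continuous_on_norm linear_continuous_on ip_blin1)
      then have "closed {x. norm (ip x y) \<le> real k}"
        by (rule closed_Collect_le) (simp add: continuous_on_const)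
      then show ?thesis using True by simp
    next
      case False then show ?thesis by simp
    qed
  qed
  have UF: "\<Union>(range F) = UNIV"
  proof -
    have "x \<in> \<Union>(range F)" for x
    proof -
      obtain K where K: "\<And>y. norm (ip x y) \<le> K * norm y"
        using ip_bound1 by blast
      define k where "k = nat \<lceil>max K 0\<rceil>"
      have "norm (ip x y) \<le> real k" if "norm y \<le> 1" for y
      proof -
        have "K * norm y \<le> max K 0 * norm y" by (simp add: mult_right_mono)
        also have "\<dots> \<le> max K 0" using that by (simp add: mult_left_le)
        also have "\<dots> \<le> real k" unfolding k_def by linarith
        finally show ?thesis using K[of y] by linarith
      qed
      then have "x \<in> F k" by (simp add: F_def)
      then show ?thesis by blast
    qed
    then show ?thesis by blast
  qed
  have "\<exists>k. interior (F k) \<noteq> {}"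
  proof (rule ccontr)
    assume "\<not> ?thesis"
    then have emp: "\<And>k. interior (F k) = {}" by blast
    have "euclidean interior_of \<Union>(range F) = {}"
      by (rule Baire_category_alt) (auto simp: completely_metrizable_space_euclidean closed_closedin[symmetric] clF emp)
    then show False using UF by simp
  qed
  then obtain k x0 where "x0 \<in> interior (F k)" by blast
  then obtain e where e: "e > 0" and ball: "ball x0 e \<subseteq> F k"
    using mem_interior by blast
  have key: "norm (ip a b) \<le> norm a * norm b * (4 * real k / e)" for a b
  proof (cases "a = 0 \<or> b = 0")
    case True then show ?thesis by auto
  next
    case False
    define a' where "a' = scaleR (e / (2 * norm a)) a"
    define b' where "b' = scaleR (1 / norm b) b"
    have na': "norm a' = e/2" using False e by (simp add: a'_def)
    have nb': "norm b' = 1" using False by (simp add: b'_def)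
    have "x0 + a' \<in> F k"
      using ball na' e by (auto simp: dist_norm)
    moreover have "x0 \<in> F k"
      using ball e by auto
    ultimately have h1: "norm (ip (x0 + a') b') \<le> real k" and h2: "norm (ip x0 b') \<le> real k"
      using nb' by (auto simp: F_def)
    have eq: "ip a' b' = ip (x0+a') b' - ip x0 b'" by (simp add: ip_addl)
    have h3: "norm (ip a' b') \<le> 2 * real k"
      unfolding eq using h1 h2 norm_triangle_ineq4[of "ip (x0+a') b'" "ip x0 b'"] by linarith
    have "ip a' b' = scaleR (e / (2 * norm a) * (1 / norm b)) (ip a b)"
      by (simp add: a'_def b'_def ip_scaleR ip_scaleRl)
    then have "norm (ip a' b') = e / (2 * norm a * norm b) * norm (ip a b)"
      using e False by (simp add: field_simps)
    then have E: "e * norm (ip a b) = 2 * norm a * norm b * norm (ip a' b')"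
      using e False by (simp add: field_simps)
    have M: "2 * norm a * norm b * norm (ip a' b') \<le> 2 * norm a * norm b * (2 * real k)"
      by (rule mult_left_mono[OF h3]) simp
    have "e * norm (ip a b) \<le> 2 * norm a * norm b * (2 * real k)"
      using E M by linarith
    then show ?thesis
      using e by (simp add: field_simps)
  qed
  show ?thesis
    by (rule bounded_bilinear.intro) (auto simp: ip_addl ip_add ip_scaleRl ip_scaleR intro: key)
qed


lemma ip_actl: "ip (act x a) y = st a * ip x y"
  by (metis ip_sym ip_act st_mult st_st)

lemma fr_blin:
  assumes "finite_rank_op scE act ip F"
  shows "bounded_linear F"
proof -
  obtain n :: nat and cs xs ys where F: "F = (\<lambda>z. \<Sum>i<n. scE (cs i) (theta act ip (xs i) (ys i) z))"
    using assms unfolding finite_rank_op_def by blast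
  show ?thesis unfolding F theta_def
    by (intro bounded_linear_sum bounded_linear_compose[OF scE_blin]
        bounded_linear_compose[OF act_blin] ip_blin2)
qed

lemma fr_tendsto:
  assumes "finite_rank_op scE act ip F"
    and "\<And>v. (\<lambda>k. ip v (\<zeta> k)) \<longlonglongrightarrow> ip v z0"
  shows "(\<lambda>k. F (\<zeta> k)) \<longlonglongrightarrow> F z0"
proof -
  obtain n :: nat and cs xs ys where F: "F = (\<lambda>z. \<Sum>i<n. scE (cs i) (theta act ip (xs i) (ys i) z))"
    using assms unfolding finite_rank_op_def by blast
  show ?thesis unfolding F theta_def
    by (intro tendsto_sum bounded_linear.tendsto[OF scE_blin]
        bounded_linear.tendsto[OF act_blin] assms(2))
qed

lemma approx_blin:
  assumes lin: "linear K"
    and ap: "\<And>e. e > 0 \<Longrightarrow> \<exists>F. finite_rank_op scE act ip F \<and> (\<forall>z. norm (K z - F z) \<le> e * norm z)"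
  shows "bounded_linear K"
proof -
  obtain F where F: "finite_rank_op scE act ip F" and FK: "\<And>z. norm (K z - F z) \<le> 1 * norm z"
    using ap[of 1] by auto
  obtain BF where BF: "\<And>z. norm (F z) \<le> norm z * BF"
    using bounded_linear.bounded[OF fr_blin[OF F]] by blast
  have "norm (K z) \<le> norm z * (1 + BF)" for z
  proof -
    have "norm (K z) \<le> norm (K z - F z) + norm (F z)"
      using norm_triangle_sub[of "K z" "F z"] by linarith
    then show ?thesis using FK[of z] BF[of z] by (simp add: algebra_simps)
  qed
  then show ?thesis
    by (intro bounded_linear_intro[where K="1 + BF"] linear_add[OF lin] linear_scale[OF lin])
qed

lemma approx_CP:
  assumes ap: "\<And>e. e > 0 \<Longrightarrow> \<exists>F. finite_rank_op scE act ip F \<and> (\<forall>z. norm (K z - F z) \<le> e * norm z)"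
  shows "CPc K"
  unfolding CPc_def
proof (intro allI impI)
  fix \<zeta> :: "nat \<Rightarrow> 'e" assume "\<exists>Bd. \<forall>n. norm (\<zeta> n) \<le> Bd"
  then obtain Bd where Bd: "\<And>n. norm (\<zeta> n) \<le> Bd" by blast
  obtain r z0 where sm: "strict_mono r" and lim: "\<And>v. (\<lambda>k. ip v (\<zeta> (r k))) \<longlonglongrightarrow> ip v z0"
    using PH Bd unfolding property_H_def by metis
  have "Cauchy (\<lambda>k. K (\<zeta> (r k)))"
  proof (rule CauchyI)
    fix e :: real assume e: "e > 0"
    define B where "B = max Bd 0 + 1"
    have B1: "B > 0" by (simp add: B_def)
    have B2: "norm (\<zeta> n) \<le> B" for n using Bd[of n] by (simp add: B_def)
    note B = B1 B2
    define d where "d = e / (3 * B)"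
    have d: "d > 0" using e B by (simp add: d_def)
    obtain F where F: "finite_rank_op scE act ip F" and FK: "\<And>z. norm (K z - F z) \<le> d * norm z"
      using ap[OF d] by auto
    have "(\<lambda>k. F (\<zeta> (r k))) \<longlonglongrightarrow> F z0"
      by (rule fr_tendsto[OF F lim])
    then have "Cauchy (\<lambda>k. F (\<zeta> (r k)))" using convergent_Cauchy convergentI by blast
    then obtain M where M: "\<And>m n. m \<ge> M \<Longrightarrow> n \<ge> M \<Longrightarrow> norm (F (\<zeta> (r m)) - F (\<zeta> (r n))) < e/3"
      using CauchyD[of _ "e/3"] e by (meson divide_pos_pos zero_less_numeral)
    have dB: "d * norm (\<zeta> n) \<le> e/3" for n
    proof -
      have "d * norm (\<zeta> n) \<le> d * B" using B(2)[of n] d by (simp add: mult_left_mono)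
      also have "\<dots> = e/3" using B by (simp add: d_def)
      finally show ?thesis .
    qed
    show "\<exists>M. \<forall>m\<ge>M. \<forall>n\<ge>M. norm (K (\<zeta> (r m)) - K (\<zeta> (r n))) < e"
    proof (intro exI allI impI)
      fix m n assume mn: "m \<ge> M" "n \<ge> M"
      let ?a = "\<zeta> (r m)" and ?b = "\<zeta> (r n)"
      have eq: "K ?a - K ?b = (K ?a - F ?a) + (F ?a - F ?b) - (K ?b - F ?b)" by simp
      have t1: "norm (K ?a - K ?b) \<le> norm ((K ?a - F ?a) + (F ?a - F ?b)) + norm (K ?b - F ?b)"
        unfolding eq by (rule norm_triangle_ineq4)
      have t2: "norm ((K ?a - F ?a) + (F ?a - F ?b)) \<le> norm (K ?a - F ?a) + norm (F ?a - F ?b)"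
        by (rule norm_triangle_ineq)
      have "norm (K ?a - K ?b) \<le> norm (K ?a - F ?a) + norm (F ?a - F ?b) + norm (K ?b - F ?b)"
        using t1 t2 by linarith
      also have "\<dots> < e/3 + e/3 + e/3"
        using FK[of ?a] FK[of ?b] dB[of "r m"] dB[of "r n"] M[OF mn] by linarith
      finally show "norm (K ?a - K ?b) < e" by simp
    qed
  qed
  then show "\<exists>r. strict_mono r \<and> convergent (\<lambda>k. K (\<zeta> (r k)))"
    using sm Cauchy_convergent_iff by blast
qed

lemma adj_lin:
  assumes adj: "\<And>x y. ip (T x) y = ip x (T' y)"
  shows "T (x + y) = T x + T y" and "T (scE c x) = scE c (T x)" and "linear T"
proof -
  show add: "T (x + y) = T x + T y" for x y
    by (rule ip_eqI) (simp add: adj ip_addl)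
  show sc: "T (scE c x) = scE c (T x)" for c x
    by (rule ip_eqI) (simp add: adj ip_scEl)
  show "linear T"
    by (rule linearI) (auto simp: add sc[of "complex_of_real _", unfolded scE_real])
qed

lemma adj_sym:
  assumes adj: "\<And>x y. ip (T x) y = ip x (T' y)"
  shows "ip (T' x) y = ip x (T y)"
  by (metis adj ip_sym)

lemma adj_approx:
  assumes adj: "\<And>x y. ip (T x) y = ip x (T' y)"
    and ap: "\<And>e. e > 0 \<Longrightarrow> \<exists>F. finite_rank_op scE act ip F \<and> (\<forall>z. norm (T z - F z) \<le> e * norm z)"
    and e: "e > 0"
  shows "\<exists>F. finite_rank_op scE act ip F \<and> (\<forall>z. norm (T' z - F z) \<le> e * norm z)"
proof -
  obtain M where M: "M > 0" "\<And>a b. norm (ip a b) \<le> norm a * norm b * M"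
    using bounded_bilinear.pos_bounded[OF ip_bbl] by blast
  define d where "d = e / M"
  have d: "d > 0" using e M by (simp add: d_def)
  obtain F where F: "finite_rank_op scE act ip F" and FK: "\<And>z. norm (T z - F z) \<le> d * norm z"
    using ap[OF d] by auto
  obtain n :: nat and cs xs ys where Fd: "F = (\<lambda>z. \<Sum>i<n. scE (cs i) (theta act ip (xs i) (ys i) z))"
    using F unfolding finite_rank_op_def by blast
  define F' where "F' = (\<lambda>z. \<Sum>i<n. scE (cnj (cs i)) (theta act ip (ys i) (xs i) z))"
  have F': "finite_rank_op scE act ip F'"
    unfolding finite_rank_op_def F'_def
    by (rule exI[of _ n], rule exI[of _ "\<lambda>i. cnj (cs i)"], rule exI[of _ ys], rule exI[of _ xs]) (rule refl)
  have adjF: "ip (F x) y = ip x (F' y)" for x y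
  proof -
    have "ip (F x) y = (\<Sum>i<n. ip (scE (cs i) (theta act ip (xs i) (ys i) x)) y)"
      unfolding Fd using linear_sum[OF ip_lin1] by simp
    also have "\<dots> = (\<Sum>i<n. ip x (scE (cnj (cs i)) (theta act ip (ys i) (xs i) y)))"
    proof (rule sum.cong[OF refl])
      fix i
      show "ip (scE (cs i) (theta act ip (xs i) (ys i) x)) y = ip x (scE (cnj (cs i)) (theta act ip (ys i) (xs i) y))"
        unfolding theta_def by (simp add: ip_scEl ip_scE ip_actl ip_act) (metis ip_sym)
    qed
    also have "\<dots> = ip x (F' y)"
      unfolding F'_def by (simp add: linear_sum[OF ip_lin2])
    finally show ?thesis .
  qed
  define D where "D z = T z - F z" for z
  define D' where "D' z = T' z - F' z" for z
  have adjD: "ip (D x) y = ip x (D' y)" for x y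
    by (simp add: D_def D'_def ip_diffl ip_diff adj adjF)
  have "norm (D' z) \<le> e * norm z" for z
  proof (cases "D' z = 0")
    case True then show ?thesis using e by simp
  next
    case False
    have "(norm (D' z))\<^sup>2 = norm (ip z (D (D' z)))"
      by (simp add: norm_sq adj_sym[of D D', OF adjD])
    also have "\<dots> \<le> norm z * norm (D (D' z)) * M" by (rule M(2))
    also have "\<dots> \<le> norm z * (d * norm (D' z)) * M"
      using FK[of "D' z"] M(1) by (simp add: D_def mult_left_mono mult_right_mono)
    also have "\<dots> = (e * norm z) * norm (D' z)"
      using M(1) by (simp add: d_def)
    finally have "norm (D' z) * norm (D' z) \<le> (e * norm z) * norm (D' z)"
      by (simp add: power2_eq_square)
    then show ?thesis using False by simp
  qed
  then show ?thesis using F' unfolding D'_def by blast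
qed


end


context hmod
begin

lemma absmul_le:
  fixes y :: "'b::real_normed_vector"
  assumes "norm y \<le> B"
  shows "c * norm y \<le> \<bar>c\<bar> * B"
proof -
  have "c * norm y \<le> \<bar>c\<bar> * norm y" by (rule mult_right_mono) auto
  also have "\<dots> \<le> \<bar>c\<bar> * B" by (rule mult_left_mono) (use assms in auto)
  finally show ?thesis .
qed

lemma infdist_lessE:
  assumes "A \<noteq> {}" "infdist x A < t"
  obtains a where "a \<in> A" "dist x a < t"
proof -
  have "bdd_below ((\<lambda>a. dist x a) ` A)" by (rule bdd_belowI2[where m=0]) simp
  then show ?thesis
    using assms that cINF_less_iff[of A "\<lambda>a. dist x a" t] infdist_notempty[of A x] by auto
qed

lemma riesz:
  fixes X Y :: "'e set"
  assumes X: "subspace X" and Y: "subspace Y" and clY: "closed Y" and YX: "Y \<subseteq> X" and ne: "Y \<noteq> X"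
  shows "\<exists>x\<in>X. norm x = 1 \<and> (\<forall>y\<in>Y. 1/2 \<le> norm (x - y))"
proof -
  obtain x0 where x0: "x0 \<in> X" "x0 \<notin> Y" using YX ne by blast
  have Yne: "Y \<noteq> {}" using subspace_0[OF Y] by blast
  define d where "d = infdist x0 Y"
  have d: "d > 0" using infdist_pos_not_in_closed[OF clY Yne x0(2)] by (simp add: d_def)
  obtain y0 where y0: "y0 \<in> Y" "dist x0 y0 < 2 * d"
    using infdist_lessE[OF Yne, of x0 "2*d"] d by (auto simp: d_def)
  define a where "a = norm (x0 - y0)"
  have ad: "d \<le> a" using infdist_le[OF y0(1), of x0] by (simp add: a_def d_def dist_norm)
  have apos: "a > 0" using ad d by simp
  have a2: "a < 2 * d" using y0(2) by (simp add: a_def dist_norm)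
  define x where "x = scaleR (1/a) (x0 - y0)"
  have ax: "scaleR a x = x0 - y0" using apos by (simp add: x_def)
  have xX: "x \<in> X" unfolding x_def
    by (intro subspace_scale[OF X] subspace_diff[OF X] x0(1)) (use y0(1) YX in auto)
  have nx: "norm x = 1" using apos by (simp add: x_def a_def)
  have "1/2 \<le> norm (x - y)" if "y \<in> Y" for y
  proof -
    have yy: "y0 + scaleR a y \<in> Y" using subspace_add[OF Y] subspace_scale[OF Y] y0(1) that by blast
    have "d \<le> norm (x0 - (y0 + scaleR a y))" using infdist_le[OF yy, of x0] by (simp add: d_def dist_norm)
    also have "x0 - (y0 + scaleR a y) = scaleR a (x - y)"
      by (simp add: scaleR_right_diff_distrib ax algebra_simps)
    finally have "d \<le> a * norm (x - y)" using apos by simp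
    then have "a * 1 < a * (2 * norm (x - y))" using a2 by linarith
    then have "1 < 2 * norm (x - y)" using apos by (simp only: mult_less_cancel_left_pos)
    then show ?thesis by simp
  qed
  then show ?thesis using xX nx by blast
qed

lemma fred_subseq:
  assumes K: "bounded_linear K" "CPc K" and mu: "\<mu> \<noteq> 0"
    and bd: "\<And>n. norm (z n) \<le> B"
    and lim: "(\<lambda>n. scE \<mu> (z n) - K (z n)) \<longlonglongrightarrow> v"
  obtains r z0 where "strict_mono r" "(\<lambda>j. z (r j)) \<longlonglongrightarrow> z0" "scE \<mu> z0 - K z0 = v"
proof -
  obtain r L where r: "strict_mono r" and L: "(\<lambda>k. K (z (r k))) \<longlonglongrightarrow> L"
    by (rule CPcD[OF K(2) bd])
  have l1: "(\<lambda>k. scE \<mu> (z (r k)) - K (z (r k))) \<longlonglongrightarrow> v"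
    using LIMSEQ_subseq_LIMSEQ[OF lim r] by (simp add: o_def)
  have "(\<lambda>k. (scE \<mu> (z (r k)) - K (z (r k))) + K (z (r k))) \<longlonglongrightarrow> v + L"
    by (intro tendsto_add l1 L)
  then have l2: "(\<lambda>k. scE \<mu> (z (r k))) \<longlonglongrightarrow> v + L" by simp
  have l3: "(\<lambda>k. scE (1/\<mu>) (scE \<mu> (z (r k)))) \<longlonglongrightarrow> scE (1/\<mu>) (v + L)"
    by (rule bounded_linear.tendsto[OF scE_blin l2])
  have inv: "scE (1/\<mu>) (scE \<mu> w) = w" for w
    using mu by (simp add: scE_mult[symmetric])
  define z0 where "z0 = scE (1/\<mu>) (v + L)"
  have l4: "(\<lambda>k. z (r k)) \<longlonglongrightarrow> z0" using l3 by (simp add: inv z0_def)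
  have blT: "bounded_linear (\<lambda>w. scE \<mu> w - K w)"
    by (intro bounded_linear_sub scE_blin K(1))
  have "(\<lambda>k. scE \<mu> (z (r k)) - K (z (r k))) \<longlonglongrightarrow> scE \<mu> z0 - K z0"
    using bounded_linear.tendsto[OF blT l4] .
  then have "scE \<mu> z0 - K z0 = v" using l1 by (rule LIMSEQ_unique)
  then show ?thesis using that r l4 by blast
qed

lemma closed_range:
  assumes K: "bounded_linear K" "CPc K" and mu: "\<mu> \<noteq> 0"
  shows "closed (range (\<lambda>z. scE \<mu> z - K z))"
proof -
  define T where "T z = scE \<mu> z - K z" for z
  have blT: "bounded_linear T" unfolding T_def by (intro bounded_linear_sub scE_blin K(1))
  have linT: "linear T" using blT bounded_linear.linear by blast
  define N where "N = {x. T x = 0}"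
  have clN: "closed N" unfolding N_def
    by (intro closed_Collect_eq linear_continuous_on blT continuous_on_const)
  have N0: "0 \<in> N" by (simp add: N_def linear_0[OF linT])
  have Nne: "N \<noteq> {}" using N0 by blast
  have Nlin: "a \<in> N \<Longrightarrow> b \<in> N \<Longrightarrow> a + scaleR c b \<in> N" for a b c
    by (simp add: N_def linear_add[OF linT] linear_scale[OF linT])
  have "\<exists>c. \<forall>x. infdist x N \<le> c * norm (T x)"
  proof (rule ccontr)
    assume "\<not> ?thesis"
    then have "\<forall>n::nat. \<exists>x. infdist x N > real (Suc n) * norm (T x)" by (meson not_le)
    then obtain x where x: "\<And>n. infdist (x n) N > real (Suc n) * norm (T (x n))" by metis
    define d where "d n = infdist (x n) N" for n
    have dpos: "d n > 0" for n
    proof -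
      have "0 \<le> real (Suc n) * norm (T (x n))" by simp
      then show ?thesis using x[of n] unfolding d_def by linarith
    qed
    have "\<forall>n. \<exists>k. k \<in> N \<and> dist (x n) k < d n + d n"
      using infdist_lessE[OF Nne] dpos by (metis d_def less_add_same_cancel1)
    then obtain k where kN: "\<And>n. k n \<in> N" and kd: "\<And>n. dist (x n) (k n) < d n + d n" by metis
    define a where "a n = norm (x n - k n)" for n
    have da: "d n \<le> a n" for n using infdist_le[OF kN, of "x n"] by (simp add: a_def d_def dist_norm)
    have apos: "a n > 0" for n using da[of n] dpos[of n] by simp
    have a2: "a n < 2 * d n" for n using kd[of n] by (simp add: a_def dist_norm)
    define w where "w n = scaleR (1 / a n) (x n - k n)" for n
    have nw: "norm (w n) = 1" for n using apos[of n] by (simp add: w_def a_def)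
    have Tk: "T (k n) = 0" for n using kN[of n] by (simp add: N_def)
    have Tw: "T (w n) = scaleR (1 / a n) (T (x n))" for n
      by (simp add: w_def linear_scale[OF linT] linear_diff[OF linT] Tk)
    have Twle: "norm (T (w n)) \<le> inverse (real (Suc n))" for n
    proof -
      have "real (Suc n) * norm (T (x n)) \<le> a n" using x[of n] da[of n] by (simp add: d_def)
      then have "norm (T (x n)) \<le> a n / real (Suc n)" by (simp add: field_simps)
      then have "norm (T (x n)) / a n \<le> inverse (real (Suc n))"
        using apos[of n] by (simp add: field_simps)
      then show ?thesis using apos[of n] by (simp add: Tw)
    qed
    have Twlim: "(\<lambda>n. T (w n)) \<longlonglongrightarrow> 0"
      by (rule Lim_null_comparison[OF always_eventually LIMSEQ_inverse_real_of_nat]) (use Twle in auto)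
    have far: "1/2 \<le> norm (w n - m)" if "m \<in> N" for n m
    proof -
      have kk: "k n + scaleR (a n) m \<in> N" using Nlin[OF kN that] .
      have "d n \<le> norm (x n - (k n + scaleR (a n) m))"
        using infdist_le[OF kk, of "x n"] by (simp add: d_def dist_norm)
      also have aw: "scaleR (a n) (w n) = x n - k n" using apos[of n] by (simp add: w_def)
      then have "x n - (k n + scaleR (a n) m) = scaleR (a n) (w n - m)"
        by (simp add: scaleR_right_diff_distrib algebra_simps)
      finally have "d n \<le> a n * norm (w n - m)" using apos[of n] by simp
      then have "a n * 1 < a n * (2 * norm (w n - m))" using a2[of n] by linarith
      then have "1 < 2 * norm (w n - m)" using apos[of n] by (simp only: mult_less_cancel_left_pos)
      then show ?thesis by simp
    qed
    obtain r w0 where sm: "strict_mono r" and wl: "(\<lambda>j. w (r j)) \<longlonglongrightarrow> w0" and Tw0: "scE \<mu> w0 - K w0 = 0"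
      by (rule fred_subseq[OF K mu, of w 1 0]) (simp_all add: nw Twlim[unfolded T_def])
    have w0N: "w0 \<in> N" using Tw0 by (simp add: N_def T_def)
    obtain j where "\<forall>n\<ge>j. norm (w (r n) - w0) < 1/2"
      using LIMSEQ_D[OF wl, of "1/2"] by auto
    then have "norm (w (r j) - w0) < 1/2" by simp
    then show False using far[OF w0N, of "r j"] by linarith
  qed
  then obtain c where c: "\<And>x. infdist x N \<le> c * norm (T x)" by blast
  have "l \<in> range T" if y: "\<And>n. y n \<in> range T" and yl: "y \<longlonglongrightarrow> l" for y l
  proof -
    have "\<forall>n. \<exists>z. y n = T z" using y by blast
    then obtain x where x: "\<And>n. y n = T (x n)" by metis
    have "\<forall>n. \<exists>k. k \<in> N \<and> dist (x n) k < infdist (x n) N + 1"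
    proof
      fix n
      obtain k where "k \<in> N" "dist (x n) k < infdist (x n) N + 1"
        by (rule infdist_lessE[OF Nne, of "x n" "infdist (x n) N + 1"]) simp
      then show "\<exists>k. k \<in> N \<and> dist (x n) k < infdist (x n) N + 1" by blast
    qed
    then obtain k where kN: "\<And>n. k n \<in> N" and kd: "\<And>n. dist (x n) (k n) < infdist (x n) N + 1" by metis
    have "Bseq y" using yl convergent_imp_Bseq convergentI by blast
    then obtain By where By: "\<And>n. norm (y n) \<le> By" by (meson BseqE)
    define x' where "x' n = x n - k n" for n
    have Tx': "T (x' n) = y n" for n
      using kN[of n] by (simp add: x'_def linear_diff[OF linT] N_def x)
    have bx': "norm (x' n) \<le> \<bar>c\<bar> * By + 1" for n
    proof -
      have "norm (x' n) < c * norm (y n) + 1"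
        using kd[of n] c[of "x n"] by (simp add: x'_def dist_norm x)
      also have "c * norm (y n) \<le> \<bar>c\<bar> * By"
        using By[of n] by (rule absmul_le)
      finally show ?thesis by simp
    qed
    have "(\<lambda>n. scE \<mu> (x' n) - K (x' n)) \<longlonglongrightarrow> l" using yl Tx' by (simp add: T_def)
    then obtain r z0 where "strict_mono r" "(\<lambda>j. x' (r j)) \<longlonglongrightarrow> z0" "scE \<mu> z0 - K z0 = l"
      by (rule fred_subseq[OF K mu bx'])
    then have "T z0 = l" by (simp add: T_def)
    then show ?thesis by (rule range_eqI[OF sym])
  qed
  then show ?thesis unfolding closed_sequential_limits T_def[symmetric] by blast
qed

lemma surj_on_R:
  fixes \<mu> :: real and K S :: "'e \<Rightarrow> 'e" and R :: "'e set"
  assumes K: "bounded_linear K" "CPc K" and mu: "\<mu> \<noteq> 0"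
    and Sdef: "\<And>z. S z = scaleR \<mu> z - K z"
    and clR: "closed R" and subR: "subspace R" and SR: "S ` R \<subseteq> R"
    and inj: "\<And>r. r \<in> R \<Longrightarrow> S r = 0 \<Longrightarrow> r = 0"
  shows "S ` R = R"
proof -
  have S_eq: "S z = scE (complex_of_real \<mu>) z - K z" for z by (simp add: Sdef scE_real)
  have mu': "complex_of_real \<mu> \<noteq> 0" using mu by simp
  have blS: "bounded_linear S" unfolding S_eq[abs_def] by (intro bounded_linear_sub scE_blin K(1))
  have linS: "linear S" using blS bounded_linear.linear by blast
  have "\<exists>c. \<forall>r\<in>R. norm r \<le> c * norm (S r)"
  proof (rule ccontr)
    assume "\<not> ?thesis"
    then have "\<forall>n::nat. \<exists>r\<in>R. norm r > real (Suc n) * norm (S r)" by (meson not_le)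
    then obtain x where xR: "\<And>n. x n \<in> R" and x: "\<And>n. norm (x n) > real (Suc n) * norm (S (x n))" by metis
    have xpos: "norm (x n) > 0" for n
    proof -
      have "0 \<le> real (Suc n) * norm (S (x n))" by simp
      then show ?thesis using x[of n] by linarith
    qed
    define w where "w n = scaleR (1 / norm (x n)) (x n)" for n
    have wR: "w n \<in> R" for n unfolding w_def by (intro subspace_scale[OF subR] xR)
    have nw: "norm (w n) = 1" for n using xpos[of n] by (simp add: w_def)
    have Swle: "norm (S (w n)) \<le> inverse (real (Suc n))" for n
    proof -
      have "real (Suc n) * norm (S (x n)) \<le> norm (x n)" using x[of n] by simp
      then have "norm (S (x n)) / norm (x n) \<le> inverse (real (Suc n))"
        using xpos[of n] by (simp add: field_simps)
      then show ?thesis using xpos[of n] by (simp add: w_def linear_scale[OF linS])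
    qed
    have Swlim: "(\<lambda>n. S (w n)) \<longlonglongrightarrow> 0"
      by (rule Lim_null_comparison[OF always_eventually LIMSEQ_inverse_real_of_nat]) (use Swle in auto)
    obtain r w0 where sm: "strict_mono r" and wl: "(\<lambda>j. w (r j)) \<longlonglongrightarrow> w0" and Sw0: "scE (complex_of_real \<mu>) w0 - K w0 = 0"
      by (rule fred_subseq[OF K mu', of w 1 0]) (simp_all add: nw Swlim[unfolded S_eq])
    have w0R: "w0 \<in> R" using closed_sequentially[OF clR _ wl] wR by blast
    have "w0 = 0" using inj[OF w0R] Sw0 S_eq by simp
    moreover have "(\<lambda>j. norm (w (r j))) \<longlonglongrightarrow> norm w0" using tendsto_norm[OF wl] .
    then have "norm w0 = 1" using nw by (simp add: LIMSEQ_const_iff)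
    ultimately show False by simp
  qed
  then obtain c where c: "\<And>r. r \<in> R \<Longrightarrow> norm r \<le> c * norm (S r)" by blast
  have climg: "closed (S ` A)" if AR: "A \<subseteq> R" and clA: "closed A" for A
  proof -
    have "l \<in> S ` A" if y: "\<And>n. y n \<in> S ` A" and yl: "y \<longlonglongrightarrow> l" for y l
    proof -
      have "\<forall>n. \<exists>z. z \<in> A \<and> y n = S z" using y by blast
      then obtain a where aA: "\<And>n. a n \<in> A" and ya: "\<And>n. y n = S (a n)" by metis
      have "Bseq y" using yl convergent_imp_Bseq convergentI by blast
      then obtain By where By: "\<And>n. norm (y n) \<le> By" by (meson BseqE)
      have ba: "norm (a n) \<le> \<bar>c\<bar> * By" for n
      proof -
        have "norm (a n) \<le> c * norm (y n)" using c[of "a n"] aA[of n] AR ya by auto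
        also have "\<dots> \<le> \<bar>c\<bar> * By"
          using By[of n] by (rule absmul_le)
        finally show ?thesis .
      qed
      have yeq: "(\<lambda>n. scE (complex_of_real \<mu>) (a n) - K (a n)) = y" by (rule ext) (simp add: ya S_eq)
      have "(\<lambda>n. scE (complex_of_real \<mu>) (a n) - K (a n)) \<longlonglongrightarrow> l" unfolding yeq by (rule yl)
      then obtain r z0 where "strict_mono r" and r: "(\<lambda>j. a (r j)) \<longlonglongrightarrow> z0" and z0: "scE (complex_of_real \<mu>) z0 - K z0 = l"
        by (rule fred_subseq[OF K mu' ba])
      have "z0 \<in> A" using closed_sequentially[OF clA _ r] aA by blast
      moreover have "S z0 = l" using z0 by (simp add: S_eq)
      ultimately show ?thesis by blast
    qed
    then show ?thesis unfolding closed_sequential_limits by blast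
  qed
  define Rs where "Rs n = (((`) S) ^^ n) R" for n
  have Rs0: "Rs 0 = R" and RsS: "Rs (Suc n) = S ` Rs n" for n by (simp_all add: Rs_def)
  have RsR: "Rs n \<subseteq> R" for n
  proof (induction n)
    case 0 then show ?case by (simp add: Rs0)
  next
    case (Suc n) then show ?case using SR by (simp add: RsS) (meson image_mono order_trans)
  qed
  have Rssub: "subspace (Rs n)" for n
  proof (induction n)
    case 0 then show ?case by (simp add: Rs0 subR)
  next
    case (Suc n) then show ?case by (simp add: RsS linear_subspace_image[OF linS])
  qed
  have Rscl: "closed (Rs n)" for n
  proof (induction n)
    case 0 then show ?case by (simp add: Rs0 clR)
  next
    case (Suc n) then show ?case by (simp add: RsS climg RsR)
  qed
  have Rsmono: "Rs (Suc n) \<subseteq> Rs n" for n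
  proof (induction n)
    case 0 then show ?case by (simp add: Rs0 RsS SR)
  next
    case (Suc n) then show ?case by (simp add: RsS image_mono)
  qed
  have Rsanti: "Rs m \<subseteq> Rs n" if "n \<le> m" for n m
    using lift_Suc_antimono_le[of Rs, OF Rsmono that] .
  show ?thesis
  proof (rule ccontr)
    assume neq: "S ` R \<noteq> R"
    have injS: "inj_on S R"
    proof (rule inj_onI)
      fix a b assume "a \<in> R" "b \<in> R" "S a = S b"
      then have "S (a - b) = 0" "a - b \<in> R"
        by (simp_all add: linear_diff[OF linS] subspace_diff[OF subR])
      then have "a - b = 0" using inj[of "a - b"] by blast
      then show "a = b" by simp
    qed
    have strict: "Rs (Suc n) \<noteq> Rs n" for n
    proof (induction n)
      case 0 then show ?case using neq by (simp add: Rs0 RsS)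
    next
      case (Suc n)
      show ?case
      proof
        assume "Rs (Suc (Suc n)) = Rs (Suc n)"
        then have "S ` Rs (Suc n) = S ` Rs n" by (simp add: RsS)
        then have "Rs (Suc n) = Rs n" using inj_on_image_eq_iff[OF injS RsR RsR] by blast
        then show False using Suc by simp
      qed
    qed
    have "\<forall>n. \<exists>x\<in>Rs n. norm x = 1 \<and> (\<forall>y\<in>Rs (Suc n). 1/2 \<le> norm (x - y))"
      using riesz[OF Rssub Rssub Rscl Rsmono strict] by blast
    then obtain x where xR: "\<And>n. x n \<in> Rs n" and nx: "\<And>n. norm (x n) = 1"
      and far: "\<And>n y. y \<in> Rs (Suc n) \<Longrightarrow> 1/2 \<le> norm (x n - y)" by metis
    obtain r L where r: "strict_mono r" and L: "(\<lambda>k. K (x (r k))) \<longlonglongrightarrow> L"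
      by (rule CPcD[OF K(2), of x 1]) (simp add: nx)
    have "Cauchy (\<lambda>k. K (x (r k)))" using L convergent_Cauchy convergentI by blast
    then obtain M where M: "\<And>i j. i \<ge> M \<Longrightarrow> j \<ge> M \<Longrightarrow> norm (K (x (r i)) - K (x (r j))) < \<bar>\<mu>\<bar>/2"
      using CauchyD[of _ "\<bar>\<mu>\<bar>/2"] mu by (meson divide_pos_pos zero_less_numeral zero_less_abs_iff)
    define n where "n = r M"
    define m where "m = r (Suc M)"
    have nm: "Suc n \<le> m" using r unfolding n_def m_def strict_mono_def by (simp add: Suc_leI)
    define y where "y = scaleR (1/\<mu>) (S (x n) + scaleR \<mu> (x m) - S (x m))"
    have yR: "y \<in> Rs (Suc n)"
    proof -
      have "S (x n) \<in> Rs (Suc n)" using xR[of n] by (simp add: RsS)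
      moreover have "x m \<in> Rs (Suc n)" using xR[of m] Rsanti[OF nm] by blast
      moreover have "S (x m) \<in> Rs (Suc n)"
        using xR[of m] Rsanti[of "Suc n" "Suc m"] nm by (auto simp: RsS)
      ultimately show ?thesis unfolding y_def
        by (intro subspace_scale[OF Rssub] subspace_diff[OF Rssub] subspace_add[OF Rssub]) auto
    qed
    have Kx: "K z = scaleR \<mu> z - S z" for z by (simp add: Sdef)
    have my: "scaleR \<mu> y = S (x n) + scaleR \<mu> (x m) - S (x m)" using mu by (simp add: y_def)
    have "K (x n) - K (x m) = scaleR \<mu> (x n - y)"
      by (simp add: Kx scaleR_right_diff_distrib my algebra_simps)
    then have "norm (K (x n) - K (x m)) = \<bar>\<mu>\<bar> * norm (x n - y)" by simp
    moreover have "\<bar>\<mu>\<bar> * (1/2) \<le> \<bar>\<mu>\<bar> * norm (x n - y)"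
      using far[OF yR] by (rule mult_left_mono) simp
    moreover have "norm (K (x n) - K (x m)) < \<bar>\<mu>\<bar>/2"
      using M[of M "Suc M"] by (simp add: n_def m_def)
    ultimately show False by simp
  qed
qed

end


context hmod
begin

lemma main_l:
  fixes C :: "'e \<Rightarrow> 'e" and l :: complex
  assumes Cc: "compact_op scE act ip C" and l: "l \<noteq> 0"
  shows "closed (range (\<lambda>z. scE l z - C z)) \<and> orth_summand ip (range (\<lambda>z. scE l z - C z))
    \<and> orth ip (range (\<lambda>z. scE l z - C z)) = {y. scE (cnj l) y - adjoint ip C y = 0}"
proof -
  define Cs where "Cs = adjoint ip C"
  have "adjointable ip C" using Cc unfolding compact_op_def by blast
  then have "\<exists>S. \<forall>x y. ip (C x) y = ip x (S y)" unfolding adjointable_def .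
  then have "\<forall>x y. ip (C x) y = ip x (Cs y)"
    unfolding Cs_def adjoint_def by (rule someI_ex)
  then have adjC: "\<And>x y. ip (C x) y = ip x (Cs y)" by blast
  have apC: "\<And>e. e > 0 \<Longrightarrow> \<exists>F. finite_rank_op scE act ip F \<and> (\<forall>z. norm (C z - F z) \<le> e * norm z)"
    using Cc unfolding compact_op_def by blast
  have apCs: "\<And>e. e > 0 \<Longrightarrow> \<exists>F. finite_rank_op scE act ip F \<and> (\<forall>z. norm (Cs z - F z) \<le> e * norm z)"
    by (rule adj_approx[OF adjC apC])
  have adjCs: "\<And>x y. ip (Cs x) y = ip x (C y)" by (rule adj_sym[OF adjC])
  have blC: "bounded_linear C" by (rule approx_blin[OF adj_lin(3)[OF adjC] apC])
  have blCs: "bounded_linear Cs" by (rule approx_blin[OF adj_lin(3)[OF adjCs] apCs])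
  have CPC: "CPc C" by (rule approx_CP[OF apC])
  have CPCs: "CPc Cs" by (rule approx_CP[OF apCs])
  define T where "T z = scE l z - C z" for z
  define T' where "T' z = scE (cnj l) z - Cs z" for z
  have adjT: "ip (T x) y = ip x (T' y)" for x y
    by (simp add: T_def T'_def ip_diffl ip_diff ip_scEl ip_scE adjC)
  have adjT': "ip (T' x) y = ip x (T y)" for x y by (rule adj_sym[OF adjT])
  have blT: "bounded_linear T" unfolding T_def[abs_def] by (intro bounded_linear_sub scE_blin blC)
  have blT': "bounded_linear T'" unfolding T'_def[abs_def] by (intro bounded_linear_sub scE_blin blCs)
  have linT: "linear T" using blT bounded_linear.linear by blast
  have linT': "linear T'" using blT' bounded_linear.linear by blast
  have clT: "closed (range T)" unfolding T_def[abs_def] by (rule closed_range[OF blC CPC l])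
  define \<mu> where "\<mu> = (cmod l)\<^sup>2"
  have mu: "\<mu> \<noteq> 0" using l by (simp add: \<mu>_def)
  define S where "S z = T (T' z)" for z
  define K where "K z = scaleR \<mu> z - S z" for z
  have ll: "scE l (scE (cnj l) z) = scaleR \<mu> z" for z
  proof -
    have lc: "l * cnj l = complex_of_real \<mu>" unfolding \<mu>_def by (rule complex_norm_square[symmetric])
    have "scE l (scE (cnj l) z) = scE (l * cnj l) z" by (simp only: scE_mult)
    also have "\<dots> = scaleR \<mu> z" by (simp only: lc scE_real)
    finally show ?thesis .
  qed
  have Keq: "K = (\<lambda>z. scE l (Cs z) + C (T' z))"
  proof (rule ext)
    fix z
    have "S z = scaleR \<mu> z - scE l (Cs z) - C (T' z)"
      by (simp add: S_def T_def T'_def scE_diff ll)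
    then show "K z = scE l (Cs z) + C (T' z)" by (simp add: K_def)
  qed
  have blK: "bounded_linear K" unfolding Keq
    by (intro bounded_linear_add bounded_linear_compose[OF scE_blin blCs] bounded_linear_compose[OF blC blT'])
  have CPK: "CPc K" unfolding Keq
    by (intro CPc_add CPc_left[OF CPCs scE_blin] CPc_right[OF CPC blT'])
  have Sdef: "S z = scaleR \<mu> z - K z" for z by (simp add: K_def)
  have blS: "bounded_linear S" unfolding S_def[abs_def] by (rule bounded_linear_compose[OF blT blT'])
  have linS: "linear S" using blS bounded_linear.linear by blast
  have adjS: "ip (S x) y = ip x (S y)" for x y by (simp add: S_def adjT adjT')
  define R where "R = range S"
  have rS: "range S = range (\<lambda>z. scE (complex_of_real \<mu>) z - K z)"
    by (simp add: Sdef scE_real)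
  have clR: "closed R" unfolding R_def rS
    by (rule closed_range[OF blK CPK]) (simp add: mu)
  have subR: "subspace R" unfolding R_def by (rule linear_subspace_image[OF linS subspace_UNIV])
  have SR: "S ` R \<subseteq> R" unfolding R_def by blast
  have inj: "r = 0" if rR: "r \<in> R" and Sr0: "S r = 0" for r
  proof -
    obtain u where u: "r = S u" using rR unfolding R_def by blast
    have "ip r r = ip u (S r)" by (simp add: u adjS)
    then have "ip r r = 0" using Sr0 by simp
    then show ?thesis using ip_zero_iff by blast
  qed
  have SRR: "S ` R = R" by (rule surj_on_R[OF blK CPK mu Sdef clR subR SR inj])
  have kerT': "T' y = 0" if "S y = 0" for y
  proof -
    have "ip (T' y) (T' y) = ip y (S y)" by (simp add: S_def adjT')
    then show ?thesis using that ip_zero_iff by simp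
  qed
  have orth_eq: "orth ip (range T) = {y. T' y = 0}"
  proof
    show "orth ip (range T) \<subseteq> {y. T' y = 0}"
    proof
      fix y assume "y \<in> orth ip (range T)"
      then have "ip (T (T' y)) y = 0" unfolding orth_def by blast
      then have "ip (T' y) (T' y) = 0" by (simp add: adjT)
      then show "y \<in> {y. T' y = 0}" using ip_zero_iff by simp
    qed
    show "{y. T' y = 0} \<subseteq> orth ip (range T)"
      unfolding orth_def by (auto simp: adjT)
  qed
  have ds: "direct_sum (range T) (orth ip (range T))"
    unfolding direct_sum_def
  proof
    show "\<forall>x. \<exists>y\<in>range T. \<exists>z\<in>orth ip (range T). x = y + z"
    proof
      fix x
      have "S x \<in> S ` R" using SRR unfolding R_def by blast
      then obtain r where rR: "r \<in> R" and Sr: "S x = S r" by blast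
      obtain u where u: "r = S u" using rR unfolding R_def by blast
      have "S (x - r) = 0" by (simp add: linear_diff[OF linS] Sr)
      then have "T' (x - r) = 0" by (rule kerT')
      then have "x - r \<in> orth ip (range T)" using orth_eq by blast
      moreover have "r \<in> range T" by (simp add: u S_def)
      ultimately show "\<exists>y\<in>range T. \<exists>z\<in>orth ip (range T). x = y + z"
        by (intro bexI[of _ r] bexI[of _ "x - r"]) simp_all
    qed
    show "range T \<inter> orth ip (range T) = {0}"
    proof
      show "range T \<inter> orth ip (range T) \<subseteq> {0}"
      proof
        fix z assume z: "z \<in> range T \<inter> orth ip (range T)"
        then have "ip z z = 0" unfolding orth_def by blast
        then show "z \<in> {0}" using ip_zero_iff by simp
      qed
      have "T 0 = 0" by (rule linear_0[OF linT])
      then have "0 \<in> range T" by (metis rangeI)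
      moreover have "0 \<in> orth ip (range T)" unfolding orth_def by simp
      ultimately show "{0} \<subseteq> range T \<inter> orth ip (range T)" by blast
    qed
  qed
  show ?thesis
    using clT ds orth_eq unfolding orth_summand_def T_def[abs_def] T'_def[abs_def] Cs_def by simp
qed

end

theorem lemma3p2:
  fixes sc :: "complex \<Rightarrow> 'a::{real_normed_algebra,banach} \<Rightarrow> 'a"
    and st :: "'a \<Rightarrow> 'a"
    and scE :: "complex \<Rightarrow> 'e::banach \<Rightarrow> 'e"
    and act :: "'e \<Rightarrow> 'a \<Rightarrow> 'e"
    and ip :: "'e \<Rightarrow> 'e \<Rightarrow> 'a"
    and C :: "'e \<Rightarrow> 'e"
  assumes "cstar_algebra sc st"
    and "hilbert_module sc st scE act ip"
    and "property_H ip"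
    and "compact_op scE act ip C"
  shows "(\<forall>l::complex. l \<noteq> 0 \<longrightarrow>
            closed (range (\<lambda>z. scE l z - C z)) \<and>
            orth_summand ip (range (\<lambda>z. scE l z - C z))) \<and>
         direct_sum {x. x - adjoint ip C x = 0} (range (\<lambda>z. z - C z)) \<and>
         {x. x - adjoint ip C x = 0} = orth ip (range (\<lambda>z. z - C z))"
proof -
  interpret hmod sc st scE act ip
    using assms(1-3) by unfold_locales
  have M: "closed (range (\<lambda>z. scE l z - C z)) \<and> orth_summand ip (range (\<lambda>z. scE l z - C z))
    \<and> orth ip (range (\<lambda>z. scE l z - C z)) = {y. scE (cnj l) y - adjoint ip C y = 0}"
    if "l \<noteq> 0" for l
    using main_l[OF assms(4) that] .
  have M1: "orth_summand ip (range (\<lambda>z. z - C z))"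
    and M2: "orth ip (range (\<lambda>z. z - C z)) = {y. y - adjoint ip C y = 0}"
    using M[of 1] by simp_all
  have ds: "direct_sum {x. x - adjoint ip C x = 0} (range (\<lambda>z. z - C z))"
    using M1 unfolding orth_summand_def M2 direct_sum_def
    by (metis (no_types, lifting) add.commute inf_commute)
  show ?thesis using M ds M2 by blast
qed


end
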